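(* Let $A\in\mathbb R^{n_x\times n_x}$, $B\in\mathbb R^{n_x\times n_u}$, $E\in\mathbb R^{n_x\times n_w}$, $C\in\mathbb R^{n_y\times n_x}$ define the stochastic system $X_{k+1}=AX_k+BU_k+EW_k$, $Y_k=CX_k$, with i.i.d. process disturbances $W_k\in\mathcal L^2$ of known distribution. Assume that $(A,B)$ is controllable and $(A,C)$ is observable, and let $T_{\mathrm{ini}}$ be an integer not smaller than the lag of $(A,C)$. Assume this state-space model is equivalent to the VARX model $$Y_k=\hat A\,Y_{[k-T_{\mathrm{ini}},k-1]}+\hat B\,U_{[k-T_{\mathrm{ini}},k-1]}+W_{k-1},$$ with $\hat A\in\mathbb R^{n_y\times T_{\mathrm{ini}}n_y}$, $\hat B\in\mathbb R^{n_y\times T_{\mathrm{ini}}n_u}$ and $W_k\in\mathcal L^2(\mathbb R^{n_y})$. Let $(u^{\mathrm{ud}},y^{\mathrm{ud}})_{[1-T_{\mathrm{ini}},T]}$ be recorded real input-output data of the undisturbed system, i.e. $y^{\mathrm{ud}}_k=\hat A\,y^{\mathrm{ud}}_{[k-T_{\mathrm{ini}},k-1]}+\hat B\,u^{\mathrm{ud}}_{[k-T_{\mathrm{ini}},k-1]}$ for all $k\in\mathbb I_{[1,T]}$, and let $N\in\mathbb N^+$ be such that $$\operatorname{rank}\begin{bmatrix}\mathcal H_{T_{\mathrm{ini}}+N}(u^{\mathrm{ud}}_{[1,T]})\\ \mathcal H_{T_{\mathrm{ini}}}(y^{\mathrm{ud}}_{[1,T-N]})\end{bmatrix}=(T_{\mathrm{ini}}+N)n_u+T_{\mathrm{ini}}n_y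 .$$ Then a real sequence $(u,y)_{[1-T_{\mathrm{ini}},N]}$ satisfies the undisturbed dynamics $y_k=\hat A\,y_{[k-T_{\mathrm{ini}},k-1]}+\hat B\,u_{[k-T_{\mathrm{ini}},k-1]}$ for all $k\in\mathbb I_{[1,N]}$ if and only if there exists $g\in\mathbb R^{T-N-T_{\mathrm{ini}}+1}$ such that $$\begin{bmatrix}\mathcal H_{T_{\mathrm{ini}}+N}(u^{\mathrm{ud}}_{[1,T]})\\ \mathcal H_{T_{\mathrm{ini}}+N}(y^{\mathrm{ud}}_{[1,T]})\end{bmatrix}g=\begin{bmatrix}u_{[1-T_{\mathrm{ini}},N]}\\ y_{[1-T_{\mathrm{ini}},N]}\end{bmatrix}.$$
   Context: $\mathcal L^2(\mathbb R^n)$ denotes $\mathbb R^n$-valued random variables with finite second moments on a probability space. $\mathbb I_{[a,b]}=\{a,a+1,\dots,b\}$; for a sequence $z$, $z_{[a,b]}=[z_a^\top,\dots,z_b^\top]^\top$. For a sequence $z_{[a,b]}$ with $z_k\in\mathbb R^n$ and $M\le b-a+1$, the Hankel matrix $\mathcal H_M(z_{[a,b]})$ is the $Mn\times(b-a-M+2)$ block matrix whose $(r,c)$ block is $z_{a+r+c-2}$. The lag of an observable pair $(A,C)$ is the smallest $\ell$ such that $[C^\top,(CA)^\top,\dots,(CA^{\ell-1})^\top]^\top$ has full column rank. *)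

theory Defs
  imports "Jordan_Normal_Form.DL_Rank"
begin

(* Stacked vector z_[a,b] of a sequence of n-dimensional vectors (empty if b < a). *)
definition stack :: "nat \<Rightarrow> (int \<Rightarrow> real vec) \<Rightarrow> int \<Rightarrow> int \<Rightarrow> real vec" where
  "stack n z a b = vec (nat (b - a + 1) * n) (\<lambda>i. z (a + int (i div n)) $ (i mod n))"

(* Hankel matrix H_M(z_[a,b]): (M n) x (b - a - M + 2), block (r,c) = z_{a+r+c-2} (1-based). *)
definition hankel :: "nat \<Rightarrow> nat \<Rightarrow> (int \<Rightarrow> real vec) \<Rightarrow> int \<Rightarrow> int \<Rightarrow> real mat" where
  "hankel n M z a b = mat (M * n) (nat (b - a + 2 - int M))
     (\<lambda>(i, j). z (a + int (i div n) + int j) $ (i mod n))"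

definition vstack :: "real mat \<Rightarrow> real mat \<Rightarrow> real mat" where
  "vstack P Q = mat (dim_row P + dim_row Q) (dim_col P)
     (\<lambda>(i, j). if i < dim_row P then P $$ (i, j) else Q $$ (i - dim_row P, j))"

definition mrank :: "nat \<Rightarrow> real mat \<Rightarrow> nat" where
  "mrank nr M = vec_space.rank nr M"

definition ctrb_mat :: "nat \<Rightarrow> nat \<Rightarrow> real mat \<Rightarrow> real mat \<Rightarrow> real mat" where
  "ctrb_mat nx nu A B = mat nx (nx * nu) (\<lambda>(i, j). (A ^\<^sub>m (j div nu) * B) $$ (i, j mod nu))"

definition controllable :: "nat \<Rightarrow> nat \<Rightarrow> real mat \<Rightarrow> real mat \<Rightarrow> bool" where
  "controllable nx nu A B \<longleftrightarrow> mrank nx (ctrb_mat nx nu A B) = nx"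

definition obs_mat :: "nat \<Rightarrow> nat \<Rightarrow> nat \<Rightarrow> real mat \<Rightarrow> real mat \<Rightarrow> real mat" where
  "obs_mat nx ny l A C = mat (l * ny) nx (\<lambda>(i, j). (C * A ^\<^sub>m (i div ny)) $$ (i mod ny, j))"

definition obs_full_col_rank :: "nat \<Rightarrow> nat \<Rightarrow> nat \<Rightarrow> real mat \<Rightarrow> real mat \<Rightarrow> bool" where
  "obs_full_col_rank nx ny l A C \<longleftrightarrow> mrank (l * ny) (obs_mat nx ny l A C) = nx"

definition observable :: "nat \<Rightarrow> nat \<Rightarrow> real mat \<Rightarrow> real mat \<Rightarrow> bool" where
  "observable nx ny A C \<longleftrightarrow> obs_full_col_rank nx ny nx A C"

definition lag :: "nat \<Rightarrow> nat \<Rightarrow> real mat \<Rightarrow> real mat \<Rightarrow> nat" where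
  "lag nx ny A C = (LEAST l. obs_full_col_rank nx ny l A C)"

definition varx_step :: "nat \<Rightarrow> nat \<Rightarrow> nat \<Rightarrow> real mat \<Rightarrow> real mat
    \<Rightarrow> (int \<Rightarrow> real vec) \<Rightarrow> (int \<Rightarrow> real vec) \<Rightarrow> int \<Rightarrow> bool" where
  "varx_step nu ny Tini Ahat Bhat u y k \<longleftrightarrow>
     y k = Ahat *\<^sub>v stack ny y (k - int Tini) (k - 1) + Bhat *\<^sub>v stack nu u (k - int Tini) (k - 1)"

end

theory Submission imports Defs begin

lemma mv_expand:
  fixes A :: "real mat"
  assumes "A \<in> carrier_mat r c" "v \<in> carrier_vec c" "i < r"
  shows "(A *\<^sub>v v) $ i = (\<Sum>l<c. A $$ (i, l) * v $ l)"
  using assms by (simp add: scalar_prod_def atLeast0LessThan)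

lemma dim_stack[simp]: "dim_vec (stack n z a b) = nat (b - a + 1) * n"
  unfolding stack_def by (rule dim_vec)

lemma stack_carrier: "stack n z a b \<in> carrier_vec (nat (b - a + 1) * n)"
  by (rule carrier_vecI, rule dim_stack)

lemma idx_div_bound:
  assumes "i < X * (n::nat)" shows "i div n < X" "i mod n < n"
proof -
  from assms have "n > 0" by (cases n) auto
  thus "i mod n < n" by simp
  show "i div n < X" using assms by (simp add: less_mult_imp_div_less)
qed

lemma stack_cong:
  assumes "\<And>m. m \<in> {a..b} \<Longrightarrow> z m = z' m"
  shows "stack n z a b = stack n z' a b"
  unfolding stack_def
proof (rule eq_vecI)
  fix i assume "i < dim_vec (vec (nat (b - a + 1) * n) (\<lambda>i. z' (a + int (i div n)) $ (i mod n)))"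
  hence i: "i < nat (b - a + 1) * n" by simp
  have "i div n < nat (b - a + 1)" using idx_div_bound(1)[OF i] .
  hence "a + int (i div n) \<in> {a..b}" by auto
  thus "vec (nat (b - a + 1) * n) (\<lambda>i. z (a + int (i div n)) $ (i mod n)) $ i =
        vec (nat (b - a + 1) * n) (\<lambda>i. z' (a + int (i div n)) $ (i mod n)) $ i"
    using i assms by simp
qed simp

lemma stack_eqD:
  assumes eq: "stack n z a b = stack n z' a b" and m: "m \<in> {a..b}"
    and c: "z m \<in> carrier_vec n" "z' m \<in> carrier_vec n"
  shows "z m = z' m"
proof (rule eq_vecI)
  show "dim_vec (z m) = dim_vec (z' m)" using c by simp
  fix i assume "i < dim_vec (z' m)"
  hence i: "i < n" using c by simp
  define idx where "idx = nat (m - a) * n + i"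
  have "nat (m - a) + 1 \<le> nat (b - a + 1)" using m by auto
  hence "(nat (m - a) + 1) * n \<le> nat (b - a + 1) * n" by (rule mult_le_mono1)
  hence "nat (m - a) * n + i < nat (b - a + 1) * n"
    using i by (simp add: algebra_simps)
  hence lt: "idx < nat (b - a + 1) * n" unfolding idx_def .
  have d: "idx div n = nat (m - a)" "idx mod n = i" using i unfolding idx_def by auto
  have "stack n z a b $ idx = stack n z' a b $ idx" using eq by simp
  thus "z m $ i = z' m $ i" using lt d m unfolding stack_def by simp
qed

lemma stack_shift: "stack n (\<lambda>m. z (m + s)) a b = stack n z (a + s) (b + s)"
  unfolding stack_def by (simp add: algebra_simps)

lemma varx_shift:
  "varx_step nu ny Tini Ahat Bhat (\<lambda>m. u (m + s)) (\<lambda>m. y (m + s)) k =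
   varx_step nu ny Tini Ahat Bhat u y (k + s)"
  unfolding varx_step_def stack_shift by (simp add: algebra_simps)

lemma varx_cong:
  assumes "\<And>m. m \<in> {k - int Tini .. k} \<Longrightarrow> u m = u' m \<and> y m = y' m"
  shows "varx_step nu ny Tini Ahat Bhat u y k = varx_step nu ny Tini Ahat Bhat u' y' k"
proof -
  have "stack ny y (k - int Tini) (k - 1) = stack ny y' (k - int Tini) (k - 1)"
    by (rule stack_cong) (use assms in auto)
  moreover have "stack nu u (k - int Tini) (k - 1) = stack nu u' (k - int Tini) (k - 1)"
    by (rule stack_cong) (use assms in auto)
  moreover have "y k = y' k" using assms by auto
  ultimately show ?thesis unfolding varx_step_def by simp
qed

definition lcomb :: "nat \<Rightarrow> nat set \<Rightarrow> (nat \<Rightarrow> real) \<Rightarrow> (nat \<Rightarrow> int \<Rightarrow> real vec) \<Rightarrow> int \<Rightarrow> real vec" where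
  "lcomb n J c Z m = vec n (\<lambda>i. \<Sum>j\<in>J. c j * Z j m $ i)"

lemma stack_lcomb:
  assumes "l < nat (b - a + 1) * n"
  shows "stack n (lcomb n J c Z) a b $ l = (\<Sum>j\<in>J. c j * stack n (Z j) a b $ l)"
  using assms idx_div_bound[OF assms] unfolding stack_def lcomb_def by simp

lemma varx_lcomb:
  assumes Ahat: "Ahat \<in> carrier_mat ny (Tini * ny)" and Bhat: "Bhat \<in> carrier_mat ny (Tini * nu)"
    and st: "\<And>j. j \<in> J \<Longrightarrow> varx_step nu ny Tini Ahat Bhat (U j) (Y j) k"
  shows "varx_step nu ny Tini Ahat Bhat (lcomb nu J c U) (lcomb ny J c Y) k"
  unfolding varx_step_def
proof (rule eq_vecI)
  have len: "nat (k - 1 - (k - int Tini) + 1) = Tini" by simp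
  let ?sy = "\<lambda>j. stack ny (Y j) (k - int Tini) (k - 1)"
  let ?su = "\<lambda>j. stack nu (U j) (k - int Tini) (k - 1)"
  fix i assume "i < dim_vec (Ahat *\<^sub>v stack ny (lcomb ny J c Y) (k - int Tini) (k - 1) +
             Bhat *\<^sub>v stack nu (lcomb nu J c U) (k - int Tini) (k - 1))"
  hence i: "i < ny" using Bhat by simp
  have cy: "\<And>j. ?sy j \<in> carrier_vec (Tini * ny)" using stack_carrier[of ny] len by metis
  have cu: "\<And>j. ?su j \<in> carrier_vec (Tini * nu)" using stack_carrier[of nu] len by metis
  have cy': "stack ny (lcomb ny J c Y) (k - int Tini) (k - 1) \<in> carrier_vec (Tini * ny)"
    using stack_carrier[of ny] len by metis
  have cu': "stack nu (lcomb nu J c U) (k - int Tini) (k - 1) \<in> carrier_vec (Tini * nu)"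
    using stack_carrier[of nu] len by metis
  have "lcomb ny J c Y k $ i = (\<Sum>j\<in>J. c j * Y j k $ i)" using i by (simp add: lcomb_def)
  also have "\<dots> = (\<Sum>j\<in>J. c j * ((\<Sum>l<Tini * ny. Ahat $$ (i, l) * ?sy j $ l)
                                   + (\<Sum>l<Tini * nu. Bhat $$ (i, l) * ?su j $ l)))"
  proof (rule sum.cong[OF refl])
    fix j assume j: "j \<in> J"
    have "Y j k = Ahat *\<^sub>v ?sy j + Bhat *\<^sub>v ?su j" using st[OF j] unfolding varx_step_def .
    hence "Y j k $ i = (Ahat *\<^sub>v ?sy j) $ i + (Bhat *\<^sub>v ?su j) $ i" using i Bhat by simp
    thus "c j * Y j k $ i = c j * ((\<Sum>l<Tini * ny. Ahat $$ (i, l) * ?sy j $ l)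
                                   + (\<Sum>l<Tini * nu. Bhat $$ (i, l) * ?su j $ l))"
      using mv_expand[OF Ahat cy i] mv_expand[OF Bhat cu i] by simp
  qed
  also have "\<dots> = (\<Sum>l<Tini * ny. Ahat $$ (i, l) * (\<Sum>j\<in>J. c j * ?sy j $ l))
                + (\<Sum>l<Tini * nu. Bhat $$ (i, l) * (\<Sum>j\<in>J. c j * ?su j $ l))"
  proof -
    have sw: "\<And>(X :: nat \<Rightarrow> nat \<Rightarrow> real) (Q::nat \<Rightarrow> real) L. (\<Sum>j\<in>J. c j * (\<Sum>l<L. Q l * X j l)) = (\<Sum>l<L. Q l * (\<Sum>j\<in>J. c j * X j l))"
    proof -
      fix X :: "nat \<Rightarrow> nat \<Rightarrow> real" and Q :: "nat \<Rightarrow> real" and L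
      have "(\<Sum>j\<in>J. c j * (\<Sum>l<L. Q l * X j l)) = (\<Sum>j\<in>J. \<Sum>l<L. c j * (Q l * X j l))"
        by (simp add: sum_distrib_left)
      also have "\<dots> = (\<Sum>l<L. \<Sum>j\<in>J. c j * (Q l * X j l))" by (rule sum.swap)
      also have "\<dots> = (\<Sum>l<L. Q l * (\<Sum>j\<in>J. c j * X j l))"
        by (simp add: sum_distrib_left mult.left_commute)
      finally show "(\<Sum>j\<in>J. c j * (\<Sum>l<L. Q l * X j l)) = (\<Sum>l<L. Q l * (\<Sum>j\<in>J. c j * X j l))" .
    qed
    show ?thesis by (simp only: distrib_left sum.distrib sw)
  qed
  also have "\<dots> = (\<Sum>l<Tini * ny. Ahat $$ (i, l) * stack ny (lcomb ny J c Y) (k - int Tini) (k - 1) $ l)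
                + (\<Sum>l<Tini * nu. Bhat $$ (i, l) * stack nu (lcomb nu J c U) (k - int Tini) (k - 1) $ l)"
    using stack_lcomb len by simp
  also have "\<dots> = (Ahat *\<^sub>v stack ny (lcomb ny J c Y) (k - int Tini) (k - 1) +
             Bhat *\<^sub>v stack nu (lcomb nu J c U) (k - int Tini) (k - 1)) $ i"
    using mv_expand[OF Ahat cy' i] mv_expand[OF Bhat cu' i] i Ahat Bhat by simp
  finally show "lcomb ny J c Y k $ i = (Ahat *\<^sub>v stack ny (lcomb ny J c Y) (k - int Tini) (k - 1) +
             Bhat *\<^sub>v stack nu (lcomb nu J c U) (k - int Tini) (k - 1)) $ i" .
qed (use Ahat Bhat in \<open>simp add: lcomb_def\<close>)


lemma varx_det:
  assumes s1: "varx_step nu ny Tini Ahat Bhat u y k" and s2: "varx_step nu ny Tini Ahat Bhat u' y' k"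
    and ag: "\<And>m. m \<in> {k - int Tini .. k - 1} \<Longrightarrow> u m = u' m \<and> y m = y' m"
  shows "y k = y' k"
proof -
  have "stack ny y (k - int Tini) (k - 1) = stack ny y' (k - int Tini) (k - 1)"
    by (rule stack_cong) (use ag in auto)
  moreover have "stack nu u (k - int Tini) (k - 1) = stack nu u' (k - int Tini) (k - 1)"
    by (rule stack_cong) (use ag in auto)
  ultimately show ?thesis using s1 s2 unfolding varx_step_def by simp
qed

lemma hankel_carrier:
  assumes "c = nat (b - a + 2 - int M)"
  shows "hankel n M z a b \<in> carrier_mat (M * n) c"
  unfolding hankel_def assms by (rule mat_carrier)

lemma vstack_carrier:
  assumes "P \<in> carrier_mat r1 nc" "Q \<in> carrier_mat r2 nc"
  shows "vstack P Q \<in> carrier_mat (r1 + r2) nc"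
  using assms unfolding vstack_def by (intro carrier_matI) auto

lemma vstack_mult:
  fixes P Q :: "real mat"
  assumes P: "P \<in> carrier_mat r1 nc" and Q: "Q \<in> carrier_mat r2 nc" and g: "g \<in> carrier_vec nc"
  shows "vstack P Q *\<^sub>v g = (P *\<^sub>v g) @\<^sub>v (Q *\<^sub>v g)"
proof (rule eq_vecI)
  have V: "vstack P Q \<in> carrier_mat (r1 + r2) nc" by (rule vstack_carrier[OF P Q])
  show "dim_vec (vstack P Q *\<^sub>v g) = dim_vec ((P *\<^sub>v g) @\<^sub>v (Q *\<^sub>v g))" using V P Q by simp
  fix i assume "i < dim_vec ((P *\<^sub>v g) @\<^sub>v (Q *\<^sub>v g))"
  hence i: "i < r1 + r2" using P Q by simp
  show "(vstack P Q *\<^sub>v g) $ i = ((P *\<^sub>v g) @\<^sub>v (Q *\<^sub>v g)) $ i"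
  proof (cases "i < r1")
    case True
    have "(vstack P Q *\<^sub>v g) $ i = (\<Sum>l<nc. vstack P Q $$ (i, l) * g $ l)" by (rule mv_expand[OF V g i])
    also have "\<dots> = (\<Sum>l<nc. P $$ (i, l) * g $ l)"
      by (rule sum.cong) (use True P Q in \<open>auto simp: vstack_def\<close>)
    also have "\<dots> = (P *\<^sub>v g) $ i" by (rule mv_expand[OF P g True, symmetric])
    finally show ?thesis using True i P Q by simp
  next
    case False
    hence i2: "i - r1 < r2" using i by simp
    have "(vstack P Q *\<^sub>v g) $ i = (\<Sum>l<nc. vstack P Q $$ (i, l) * g $ l)" by (rule mv_expand[OF V g i])
    also have "\<dots> = (\<Sum>l<nc. Q $$ (i - r1, l) * g $ l)"
      by (rule sum.cong) (use False i P Q in \<open>auto simp: vstack_def\<close>)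
    also have "\<dots> = (Q *\<^sub>v g) $ (i - r1)" by (rule mv_expand[OF Q g i2, symmetric])
    finally show ?thesis using False i P Q by simp
  qed
qed

lemma hankel_mult:
  fixes z :: "int \<Rightarrow> real vec"
  assumes c: "c = nat (b + 1 - int M)" and g: "g \<in> carrier_vec c"
  shows "hankel n M z 1 b *\<^sub>v g =
         stack n (lcomb n {..<c} (\<lambda>j. g $ j) (\<lambda>j m. z (m + (s + int j)))) (1 - s) (int M - s)"
proof (rule eq_vecI)
  have H: "hankel n M z 1 b \<in> carrier_mat (M * n) c" by (rule hankel_carrier) (simp add: c)
  have len: "nat (int M - s - (1 - s) + 1) = M" by simp
  show "dim_vec (hankel n M z 1 b *\<^sub>v g) = dim_vec (stack n (lcomb n {..<c} (\<lambda>j. g $ j) (\<lambda>j m. z (m + (s + int j)))) (1 - s) (int M - s))"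
    using H by (simp only: dim_stack len dim_mult_mat_vec carrier_matD)
  fix i assume "i < dim_vec (stack n (lcomb n {..<c} (\<lambda>j. g $ j) (\<lambda>j m. z (m + (s + int j)))) (1 - s) (int M - s))"
  hence i: "i < M * n" by (simp only: dim_stack len)
  note ib = idx_div_bound[OF i]
  have "(hankel n M z 1 b *\<^sub>v g) $ i = (\<Sum>l<c. hankel n M z 1 b $$ (i, l) * g $ l)"
    by (rule mv_expand[OF H g i])
  also have "\<dots> = (\<Sum>l<c. g $ l * z (1 + int (i div n) + int l) $ (i mod n))"
    by (rule sum.cong) (use i H in \<open>auto simp: hankel_def c\<close>)
  also have "\<dots> = stack n (lcomb n {..<c} (\<lambda>j. g $ j) (\<lambda>j m. z (m + (s + int j)))) (1 - s) (int M - s) $ i"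
    using i ib unfolding stack_def lcomb_def len by (simp add: algebra_simps)
  finally show "(hankel n M z 1 b *\<^sub>v g) $ i = stack n (lcomb n {..<c} (\<lambda>j. g $ j) (\<lambda>j m. z (m + (s + int j)))) (1 - s) (int M - s) $ i" .
qed

lemma lcomb_carrier: "lcomb n J c Z m \<in> carrier_vec n"
  unfolding lcomb_def by (rule vec_carrier)


lemma full_rank_surj:
  fixes M :: "real mat"
  assumes M: "M \<in> carrier_mat n nc" and r: "mrank n M = n" and v: "v \<in> carrier_vec n"
  shows "\<exists>g \<in> carrier_vec nc. M *\<^sub>v g = v"
proof -
  interpret vec_space "TYPE(real)" n .
  obtain S where S: "maximal S (\<lambda>T. T \<subseteq> set (cols M) \<and> lin_indpt T)"
    using maximal_exists[of "(\<lambda>T. T \<subseteq> set (cols M) \<and> lin_indpt T)" "card (set (cols M))" "{}"]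
    by (meson List.finite_set card_mono empty_iff empty_subsetI finite_lin_indpt2 rev_finite_subset)
  have cS: "card S = n" using rank_card_indpt[OF M S] r unfolding mrank_def by simp
  have Ssub: "S \<subseteq> set (cols M)" "lin_indpt S" using S unfolding maximal_def by auto
  have colsc: "set (cols M) \<subseteq> carrier_vec n" using M cols_dim by blast
  have fS: "finite S" using Ssub(1) finite_subset by blast
  have "basis S"
    by (rule dim_li_is_basis) (use fS Ssub colsc cS dim_is_n in auto)
  hence "span S = carrier_vec n" unfolding basis_def by simp
  moreover have "span S \<subseteq> span (set (cols M))" using span_is_monotone Ssub(1) by metis
  ultimately have "v \<in> col_space M" unfolding col_space_def using v by auto
  thus ?thesis unfolding col_space_eq[OF M] using M by auto
qed

lemma mrank_le:
  fixes M :: "real mat"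
  assumes "M \<in> carrier_mat n nc" shows "mrank n M \<le> nc"
  unfolding mrank_def using vec_space.rank_le_nc[OF assms] .

theorem lemma2:
  fixes nx nu ny Tini N T :: nat
    and A B C Ahat Bhat :: "real mat"
    and uud yud :: "int \<Rightarrow> real vec"
  assumes dims: "0 < nx" "0 < nu" "0 < ny"
    and A: "A \<in> carrier_mat nx nx" and B: "B \<in> carrier_mat nx nu" and C: "C \<in> carrier_mat ny nx"
    and ctrb: "controllable nx nu A B"
    and obsv: "observable nx ny A C"
    and Tini: "lag nx ny A C \<le> Tini"
    and Ahat: "Ahat \<in> carrier_mat ny (Tini * ny)"
    and Bhat: "Bhat \<in> carrier_mat ny (Tini * nu)"
    and equiv: "\<And>x u. (\<forall>k. x k \<in> carrier_vec nx \<and> u k \<in> carrier_vec nu \<and>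
                          x (k + 1) = A *\<^sub>v x k + B *\<^sub>v u k)
               \<Longrightarrow> (\<forall>k. varx_step nu ny Tini Ahat Bhat u (\<lambda>j. C *\<^sub>v x j) k)"
    and data_dim: "\<And>k. k \<in> {1 - int Tini .. int T} \<Longrightarrow>
                         uud k \<in> carrier_vec nu \<and> yud k \<in> carrier_vec ny"
    and data_dyn: "\<And>k. k \<in> {1 .. int T} \<Longrightarrow> varx_step nu ny Tini Ahat Bhat uud yud k"
    and N: "0 < N"
    and rank: "mrank ((Tini + N) * nu + Tini * ny)
                 (vstack (hankel nu (Tini + N) uud 1 (int T))
                         (hankel ny Tini yud 1 (int T - int N)))
               = (Tini + N) * nu + Tini * ny"
  shows "\<forall>u y. (\<forall>k \<in> {1 - int Tini .. int N}. u k \<in> carrier_vec nu \<and> y k \<in> carrier_vec ny) \<longrightarrow>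
           ((\<forall>k \<in> {1 .. int N}. varx_step nu ny Tini Ahat Bhat u y k) \<longleftrightarrow>
            (\<exists>g \<in> carrier_vec (T - N - Tini + 1).
               vstack (hankel nu (Tini + N) uud 1 (int T)) (hankel ny (Tini + N) yud 1 (int T)) *\<^sub>v g
               = stack nu u (1 - int Tini) (int N) @\<^sub>v stack ny y (1 - int Tini) (int N)))"
  
proof (intro allI impI)
  fix u y :: "int \<Rightarrow> real vec"
  assume dimuy: "\<forall>k \<in> {1 - int Tini .. int N}. u k \<in> carrier_vec nu \<and> y k \<in> carrier_vec ny"
  define c where "c = nat (int T + 1 - int (Tini + N))"
  define Hu where "Hu = hankel nu (Tini + N) uud 1 (int T)"
  define Hy where "Hy = hankel ny (Tini + N) yud 1 (int T)"
  define Hy0 where "Hy0 = hankel ny Tini yud 1 (int T - int N)"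
  have HuC: "Hu \<in> carrier_mat ((Tini + N) * nu) c" unfolding Hu_def by (rule hankel_carrier) (simp add: c_def)
  have HyC: "Hy \<in> carrier_mat ((Tini + N) * ny) c" unfolding Hy_def by (rule hankel_carrier) (simp add: c_def)
  have Hy0C: "Hy0 \<in> carrier_mat (Tini * ny) c" unfolding Hy0_def by (rule hankel_carrier) (simp add: c_def)
  have M0C: "vstack Hu Hy0 \<in> carrier_mat ((Tini + N) * nu + Tini * ny) c"
    by (rule vstack_carrier[OF HuC Hy0C])
  have rk: "mrank ((Tini + N) * nu + Tini * ny) (vstack Hu Hy0) = (Tini + N) * nu + Tini * ny"
    using rank unfolding Hu_def Hy0_def .
  have "(Tini + N) * nu + Tini * ny \<le> c" using mrank_le[OF M0C] rk by simp
  moreover have "0 < (Tini + N) * nu" using N dims by simp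
  ultimately have "0 < c" by linarith
  hence TK: "Tini + N \<le> T" unfolding c_def by linarith
  hence cT: "T - N - Tini + 1 = c" unfolding c_def by linarith
  define ug where "ug g = lcomb nu {..<c} (\<lambda>j. g $ j) (\<lambda>j m. uud (m + (int Tini + int j)))" for g
  define yg where "yg g = lcomb ny {..<c} (\<lambda>j. g $ j) (\<lambda>j m. yud (m + (int Tini + int j)))" for g
  have cN: "int (Tini + N) - int Tini = int N" by simp
  have Humult: "Hu *\<^sub>v g = stack nu (ug g) (1 - int Tini) (int N)" if g: "g \<in> carrier_vec c" for g
    using hankel_mult[of c "int T" "Tini + N" g nu uud "int Tini", OF _ g] unfolding Hu_def ug_def cN
    by (simp add: c_def)
  have Hymult: "Hy *\<^sub>v g = stack ny (yg g) (1 - int Tini) (int N)" if g: "g \<in> carrier_vec c" for g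
    using hankel_mult[of c "int T" "Tini + N" g ny yud "int Tini", OF _ g] unfolding Hy_def yg_def cN
    by (simp add: c_def)
  have Hy0mult: "Hy0 *\<^sub>v g = stack ny (yg g) (1 - int Tini) 0" if g: "g \<in> carrier_vec c" for g
  proof -
    have "c = nat (int T - int N + 1 - int Tini)" by (simp add: c_def)
    from hankel_mult[OF this g, of ny yud "int Tini"] show ?thesis unfolding Hy0_def yg_def by simp
  qed
  have dyn_g: "varx_step nu ny Tini Ahat Bhat (ug g) (yg g) k" if k: "k \<in> {1 .. int N}" for g k
    unfolding ug_def yg_def
  proof (rule varx_lcomb[OF Ahat Bhat])
    fix j assume "j \<in> {..<c}"
    hence "k + (int Tini + int j) \<in> {1 .. int T}" using k cT TK by auto
    thus "varx_step nu ny Tini Ahat Bhat (\<lambda>m. uud (m + (int Tini + int j))) (\<lambda>m. yud (m + (int Tini + int j))) k"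
      unfolding varx_shift by (rule data_dyn)
  qed
  have lenN: "nat (int N - (1 - int Tini) + 1) = Tini + N" by simp
  have len0: "nat (0 - (1 - int Tini) + 1) = Tini" by simp
  have su: "stack nu z (1 - int Tini) (int N) \<in> carrier_vec ((Tini + N) * nu)" for z
    using stack_carrier[of nu z "1 - int Tini" "int N"] unfolding lenN .
  have sy: "stack ny z (1 - int Tini) (int N) \<in> carrier_vec ((Tini + N) * ny)" for z
    using stack_carrier[of ny z "1 - int Tini" "int N"] unfolding lenN .
  have sy0: "stack ny z (1 - int Tini) 0 \<in> carrier_vec (Tini * ny)" for z
    using stack_carrier[of ny z "1 - int Tini" 0] unfolding len0 .
  have Hmult: "vstack Hu Hy *\<^sub>v g = stack nu (ug g) (1 - int Tini) (int N) @\<^sub>v stack ny (yg g) (1 - int Tini) (int N)"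
    if g: "g \<in> carrier_vec c" for g
    using vstack_mult[OF HuC HyC g] Humult[OF g] Hymult[OF g] by simp
  show "(\<forall>k \<in> {1 .. int N}. varx_step nu ny Tini Ahat Bhat u y k) \<longleftrightarrow>
            (\<exists>g \<in> carrier_vec (T - N - Tini + 1).
               vstack (hankel nu (Tini + N) uud 1 (int T)) (hankel ny (Tini + N) yud 1 (int T)) *\<^sub>v g
               = stack nu u (1 - int Tini) (int N) @\<^sub>v stack ny y (1 - int Tini) (int N))"
    unfolding Hu_def[symmetric] Hy_def[symmetric] cT
  proof
    assume dyn: "\<forall>k \<in> {1 .. int N}. varx_step nu ny Tini Ahat Bhat u y k"
    define v where "v = stack nu u (1 - int Tini) (int N) @\<^sub>v stack ny y (1 - int Tini) 0"
    have vC: "v \<in> carrier_vec ((Tini + N) * nu + Tini * ny)" unfolding v_def using su sy0 by blast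
    obtain g where g: "g \<in> carrier_vec c" and Mg: "vstack Hu Hy0 *\<^sub>v g = v"
      using full_rank_surj[OF M0C rk vC] by blast
    have "(Hu *\<^sub>v g) @\<^sub>v (Hy0 *\<^sub>v g) = v" using Mg vstack_mult[OF HuC Hy0C g] by simp
    hence "stack nu (ug g) (1 - int Tini) (int N) @\<^sub>v stack ny (yg g) (1 - int Tini) 0 = v"
      using Humult[OF g] Hy0mult[OF g] by simp
    hence e1: "stack nu (ug g) (1 - int Tini) (int N) = stack nu u (1 - int Tini) (int N)"
      and e2: "stack ny (yg g) (1 - int Tini) 0 = stack ny y (1 - int Tini) 0"
      unfolding v_def using append_vec_eq[OF su su] by auto
    have uag: "ug g m = u m" if "m \<in> {1 - int Tini .. int N}" for m
      by (rule stack_eqD[OF e1 that]) (use that dimuy in \<open>auto simp: ug_def lcomb_carrier\<close>)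
    have yag0: "yg g m = y m" if "m \<in> {1 - int Tini .. 0}" for m
      by (rule stack_eqD[OF e2 that]) (use that dimuy N in \<open>auto simp: yg_def lcomb_carrier\<close>)
    have yind: "\<forall>m. 1 - int Tini \<le> m \<and> m \<le> int n \<and> m \<le> int N \<longrightarrow> yg g m = y m" for n :: nat
    proof (induction n)
      case 0
      then show ?case using yag0 by auto
    next
      case (Suc n)
      show ?case
      proof (intro allI impI)
        fix m assume m: "1 - int Tini \<le> m \<and> m \<le> int (Suc n) \<and> m \<le> int N"
        show "yg g m = y m"
        proof (cases "m \<le> int n")
          case True thus ?thesis using Suc.IH m by auto
        next
          case False
          hence mk: "m \<in> {1 .. int N}" using m by auto
          show ?thesis
          proof (rule varx_det[OF dyn_g[OF mk] dyn[rule_format, OF mk]])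
            fix m' assume "m' \<in> {m - int Tini .. m - 1}"
            thus "ug g m' = u m' \<and> yg g m' = y m'" using Suc.IH uag m False by auto
          qed
        qed
      qed
    qed
    have yag: "yg g m = y m" if "m \<in> {1 - int Tini .. int N}" for m
      using yind[of "nat (max 0 m)"] that by auto
    have "vstack Hu Hy *\<^sub>v g = stack nu u (1 - int Tini) (int N) @\<^sub>v stack ny y (1 - int Tini) (int N)"
    proof -
      have "stack nu (ug g) (1 - int Tini) (int N) = stack nu u (1 - int Tini) (int N)"
        by (rule stack_cong) (use uag in auto)
      moreover have "stack ny (yg g) (1 - int Tini) (int N) = stack ny y (1 - int Tini) (int N)"
        by (rule stack_cong) (use yag in auto)
      ultimately show ?thesis using Hmult[OF g] by simp
    qed
    thus "\<exists>g\<in>carrier_vec c. vstack Hu Hy *\<^sub>v g = stack nu u (1 - int Tini) (int N) @\<^sub>v stack ny y (1 - int Tini) (int N)"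
      using g by blast
  next
    assume "\<exists>g\<in>carrier_vec c. vstack Hu Hy *\<^sub>v g = stack nu u (1 - int Tini) (int N) @\<^sub>v stack ny y (1 - int Tini) (int N)"
    then obtain g where g: "g \<in> carrier_vec c"
      and eq: "vstack Hu Hy *\<^sub>v g = stack nu u (1 - int Tini) (int N) @\<^sub>v stack ny y (1 - int Tini) (int N)" by blast
    have "stack nu (ug g) (1 - int Tini) (int N) @\<^sub>v stack ny (yg g) (1 - int Tini) (int N)
          = stack nu u (1 - int Tini) (int N) @\<^sub>v stack ny y (1 - int Tini) (int N)"
      using eq Hmult[OF g] by simp
    hence e1: "stack nu (ug g) (1 - int Tini) (int N) = stack nu u (1 - int Tini) (int N)"
      and e2: "stack ny (yg g) (1 - int Tini) (int N) = stack ny y (1 - int Tini) (int N)"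
      using append_vec_eq[OF su su] by auto
    have ag: "ug g m = u m \<and> yg g m = y m" if "m \<in> {1 - int Tini .. int N}" for m
    proof
      show "ug g m = u m"
        by (rule stack_eqD[OF e1 that]) (use that dimuy in \<open>auto simp: ug_def lcomb_carrier\<close>)
      show "yg g m = y m"
        by (rule stack_eqD[OF e2 that]) (use that dimuy in \<open>auto simp: yg_def lcomb_carrier\<close>)
    qed
    show "\<forall>k \<in> {1 .. int N}. varx_step nu ny Tini Ahat Bhat u y k"
    proof
      fix k assume k: "k \<in> {1 .. int N}"
      have "varx_step nu ny Tini Ahat Bhat (ug g) (yg g) k" by (rule dyn_g[OF k])
      moreover have "varx_step nu ny Tini Ahat Bhat (ug g) (yg g) k = varx_step nu ny Tini Ahat Bhat u y k"
        by (rule varx_cong) (use ag k in auto)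
      ultimately show "varx_step nu ny Tini Ahat Bhat u y k" by simp
    qed
  qed
qed

end
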